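(* Assume $\theta_i<1$ for all $i$ and $\theta_j>0$ for some $j$. Suppose $\mathcal G(C)$ is a star topology with center node $l$ and $\theta_l=0$. Then the equilibrium social power $x^*$ of systems (A) and (B) is unique and satisfies: (i) $x^*\in\operatorname{int}\Delta_n$; (ii) $x^*_i=1/n$ for every $i\in\mathcal V_f\setminus\{l\}$; (iii) for every $i\in\mathcal V_p$, $x^*_i=\dfrac{n-\sqrt{n^2-4n\theta_i(1-\theta_i)}}{2n\theta_i}<\dfrac1n$, and this expression is strictly decreasing in $\theta_i\in(0,1)$; (iv) $x^*_l=\dfrac1n+\dfrac1n\sum_{j\in\mathcal V_p}\dfrac{\theta_j(1-x^*_j)}{1-\theta_jx^*_j}>\dfrac1n$.
   Context: Let $n\ge 2$, $\mathbf 1_n$ the all-ones vector, $I_n$ the identity matrix, $\Delta_n=\{x\in\mathbb R^n: x\ge 0,\ \mathbf 1_n^Tx=1\}$, $\operatorname{int}\Delta_n=\{x\in\mathbb R^n: x>0,\ \mathbf 1_n^Tx=1\}$. Let $C\in\mathbb R^{n\times n}$ be a nonnegative row-stochastic matrix with zero diagonal, and $\mathcal G(C)$ the digraph on $\{1,\dots,n\}$ with an edge $(i,j)$ iff $C_{ij}>0$. $\mathcal G(C)$ is a star topology with center node $l$ if every edge of $\mathcal G(C)$ is either from $l$ or to $l$ (i.e. $C_{ij}>0$ implies $i=l$ or $j=l$). Let $\theta=(\theta_1,\dots,\theta_n)\in[0,1]^n$, $\Theta=\mathrm{diag}(\theta)$, $W(x)=\mathrm{diag}(x)+(I_n-\mathrm{diag}(x))C$.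 Let $\mathcal V_f=\{i:\theta_i=0\}$ and $\mathcal V_p=\{i:\theta_i>0\}$. System (A): $x(s+1)=F(x(s))$, $x(0)\in\Delta_n$, where $F(x)=(I_n-\Theta)(I_n-W(x)^T\Theta)^{-1}\mathbf 1_n/n$; an equilibrium is $x^*\in\Delta_n$ with $F(x^* )=x^*$. System (B): $V(k+1)=\Theta W(x(k))V(k)+I_n-\Theta$, $x(k+1)=V(k+1)^T\mathbf 1_n/n$, with $V(0)=I_n$, $x(0)\in\Delta_n$; an equilibrium is a pair $(V^*,x^* )$ with $V^*$ row-stochastic, $x^*\in\Delta_n$, $V^*=\Theta W(x^* )V^*+I_n-\Theta$, $x^*=(V^* )^T\mathbf 1_n/n$. The equilibrium social powers of (A) and (B) coincide (the fixed points of $F$). *)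

theory Defs
  imports "HOL-Analysis.Analysis"
begin

text \<open>Vectors in R^n and n x n matrices are indexed by a finite type 'n, with n = CARD('n).\<close>

definition diagm :: "real ^ 'n \<Rightarrow> real ^ 'n ^ 'n" where
  "diagm v = (\<chi> i j. if i = j then v $ i else 0)"

definition ones_over_n :: "real ^ 'n::finite" where
  "ones_over_n = (\<chi> i. 1 / real CARD('n))"

definition std_simplex :: "(real ^ 'n::finite) set" where
  "std_simplex = {x. (\<forall>i. 0 \<le> x $ i) \<and> (\<Sum>i\<in>UNIV. x $ i) = 1}"

definition int_std_simplex :: "(real ^ 'n::finite) set" where
  "int_std_simplex = {x. (\<forall>i. 0 < x $ i) \<and> (\<Sum>i\<in>UNIV. x $ i) = 1}"

definition row_stochastic :: "real ^ 'n ^ 'n::finite \<Rightarrow> bool" where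
  "row_stochastic A \<longleftrightarrow> (\<forall>i j. 0 \<le> A $ i $ j) \<and> (\<forall>i. (\<Sum>j\<in>UNIV. A $ i $ j) = 1)"

definition star_topology :: "real ^ 'n ^ 'n \<Rightarrow> 'n \<Rightarrow> bool" where
  "star_topology C l \<longleftrightarrow> (\<forall>i j. C $ i $ j > 0 \<longrightarrow> i = l \<or> j = l)"

definition Wmat :: "real ^ 'n ^ 'n \<Rightarrow> real ^ 'n \<Rightarrow> real ^ 'n ^ 'n::finite" where
  "Wmat C x = diagm x + (mat 1 - diagm x) ** C"

definition Fmap :: "real ^ 'n \<Rightarrow> real ^ 'n ^ 'n \<Rightarrow> real ^ 'n \<Rightarrow> real ^ 'n::finite" where
  "Fmap \<theta> C x = (mat 1 - diagm \<theta>) *v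
      (matrix_inv (mat 1 - transpose (Wmat C x) ** diagm \<theta>) *v ones_over_n)"

definition equilibrium_A :: "real ^ 'n \<Rightarrow> real ^ 'n ^ 'n \<Rightarrow> real ^ 'n \<Rightarrow> bool" where
  "equilibrium_A \<theta> C x \<longleftrightarrow> x \<in> std_simplex \<and> Fmap \<theta> C x = x"

definition equilibrium_B :: "real ^ 'n \<Rightarrow> real ^ 'n ^ 'n \<Rightarrow> real ^ 'n ^ 'n \<Rightarrow> real ^ 'n::finite \<Rightarrow> bool" where
  "equilibrium_B \<theta> C V x \<longleftrightarrow> row_stochastic V \<and> x \<in> std_simplex \<and>
      V = diagm \<theta> ** Wmat C x ** V + (mat 1 - diagm \<theta>) \<and>
      x = transpose V *v ones_over_n"

end

theory Submission
  imports Defs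
begin

definition rfun :: "real \<Rightarrow> real \<Rightarrow> real" where
 "rfun N t = (if t = 0 then 1/N else (N - sqrt (N\<^sup>2 - 4*N*t*(1-t)))/(2*N*t))"

lemma rfun_props:
  assumes N: "N \<ge> 2" and t: "0 \<le> t" "t < 1"
  shows "0 < rfun N t" "rfun N t \<le> 1/N" "N * rfun N t * (1 - t * rfun N t) = 1 - t"
    "0 < t \<Longrightarrow> rfun N t < 1/N"
proof -
  have "(0 < rfun N t \<and> rfun N t \<le> 1/N \<and> N * rfun N t * (1 - t * rfun N t) = 1 - t)
        \<and> (0 < t \<longrightarrow> rfun N t < 1/N)"
  proof (cases "t = 0")
    case True thus ?thesis using N by (simp add: rfun_def)
  next
    case False
    hence tp: "0 < t" using t by simp
    define D where "D = N\<^sup>2 - 4*N*t*(1-t)"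
    define s where "s = sqrt D"
    have tt: "0 < t*(1-t)" using tp t by simp
    have "t*(1-t) \<le> 1/4" using zero_le_power2[of "t - 1/2"] by (simp add: power2_eq_square algebra_simps)
    hence "4*N*(t*(1-t)) \<le> N" using N by (simp add: mult_left_mono)
    moreover have "N < N*N" using N by simp
    moreover have "D = N*N - 4*N*(t*(1-t))" unfolding D_def by (simp add: power2_eq_square algebra_simps)
    ultimately have D0: "0 < D" by linarith
    have s2: "s\<^sup>2 = D" using D0 by (simp add: s_def)
    have s0: "0 < s" using D0 by (simp add: s_def)
    have "0 < 4*N*(t*(1-t))" using N tt by simp
    hence "D < N\<^sup>2" unfolding D_def by (simp add: algebra_simps)
    hence "s < sqrt (N\<^sup>2)" unfolding s_def by (rule real_sqrt_less_mono)
    hence sN: "s < N" using N by simp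
    have "t*t < N*(t*t)" using N tp by simp
    hence "(N - 2*t)\<^sup>2 < D" unfolding D_def by (simp add: power2_eq_square algebra_simps)
    hence sl: "N - 2*t < s" unfolding s_def by (simp add: real_less_rsqrt)
    have r: "rfun N t = (N - s)/(2*N*t)" using False by (simp add: rfun_def s_def D_def)
    have p1: "0 < rfun N t" using r sN N tp by simp
    have e: "rfun N t * N * (2*t) = N - s" using r N tp by simp
    hence "rfun N t * N * (2*t) < 1*(2*t)" using sl by simp
    hence "rfun N t * N < 1" using tp mult_right_less_imp_less[of "rfun N t * N" "2*t" 1] by simp
    hence p2: "rfun N t < 1/N" using N by (simp add: field_simps)
    have p3: "N * rfun N t * (1 - t * rfun N t) = 1 - t"
    proof -
      define u where "u = rfun N t"
      have e2: "2*N*t*u = N - s" using e unfolding u_def by (simp add: algebra_simps)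
      have "(4*N*t) * (N*u*(1-t*u)) = (2*N*t*u) * (2*N - 2*N*t*u)" by (simp add: algebra_simps)
      also have "\<dots> = (N-s)*(N+s)" using e2 by simp
      also have "\<dots> = N\<^sup>2 - s\<^sup>2" by (simp add: power2_eq_square algebra_simps)
      also have "\<dots> = (4*N*t) * (1-t)" using s2 unfolding D_def by simp
      finally have "(4*N*t) * (N*u*(1-t*u)) = (4*N*t) * (1-t)" .
      thus ?thesis using N tp unfolding u_def by simp
    qed
    show ?thesis using p1 p2 p3 by simp
  qed
  thus "0 < rfun N t" "rfun N t \<le> 1/N" "N * rfun N t * (1 - t * rfun N t) = 1 - t"
    "0 < t \<Longrightarrow> rfun N t < 1/N" by auto
qed

lemma rfun_unique:
  assumes N: "N \<ge> 2" and t: "0 \<le> t" "t < 1" and z: "0 \<le> z" "z \<le> 1"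
    and eq: "N * z * (1 - t*z) = 1 - t"
  shows "z = rfun N t"
proof (cases "t = 0")
  case True thus ?thesis using eq N by (simp add: rfun_def field_simps)
next
  case False
  hence tp: "0 < t" using t by simp
  define D where "D = N\<^sup>2 - 4*N*t*(1-t)"
  define s where "s = sqrt D"
  have "(2*N*t*z - N)\<^sup>2 = N\<^sup>2 - 4*N*t*(N * z * (1 - t*z))"
    by (simp add: power2_eq_square algebra_simps)
  hence sq: "(2*N*t*z - N)\<^sup>2 = D" unfolding D_def using eq by (simp add: mult.assoc)
  hence sa: "s = \<bar>2*N*t*z - N\<bar>" unfolding s_def by (metis real_sqrt_abs)
  have r: "rfun N t = (N - s)/(2*N*t)" using False by (simp add: rfun_def s_def D_def)
  show ?thesis
  proof (cases "2*N*t*z - N \<ge> 0")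
    case True
    have "0 < 4*N*t*(1-t)*(N-1)" using N tp t by simp
    hence "(2*N*t - N)\<^sup>2 < D" unfolding D_def by (simp add: power2_eq_square algebra_simps)
    hence "2*N*t - N < s" unfolding s_def by (simp add: real_less_rsqrt)
    hence "2*N*t*z - N > 2*N*t - N" using True sa by simp
    hence "N*t*z > N*t" by simp
    hence "z > 1" using N tp by (simp add: mult_less_cancel_left_pos) 
    thus ?thesis using z by simp
  next
    case False
    hence "s = N - 2*N*t*z" using sa by simp
    hence "rfun N t = (2*N*t*z)/(2*N*t)" using r by simp
    thus ?thesis using N tp by simp
  qed
qed

lemma Wmat_entry: "Wmat C x $ i $ k = (if i = k then x$i else 0) + (1 - x$i) * C$i$k"
proof -
  have "((mat 1 - diagm x) ** C) $ i $ k = (\<Sum>j\<in>UNIV. (if i = j then (1 - x$i) * C$j$k else 0))"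
    unfolding matrix_matrix_mult_def vec_lambda_beta by (intro sum.cong) (auto simp: mat_def diagm_def)
  also have "\<dots> = (1 - x$i) * C$i$k" by simp
  finally show ?thesis by (simp add: Wmat_def diagm_def)
qed

definition Gv :: "real^'n \<Rightarrow> 'n \<Rightarrow> real^'n \<Rightarrow> real^'n::finite" where
 "Gv \<theta> l x = (\<chi> j. if j = l then 1 / real CARD('n) + (1 / real CARD('n)) *
      (\<Sum>i\<in>UNIV. \<theta>$i * (1 - x$i) / (1 - \<theta>$i * x$i))
    else (1 - \<theta>$j) / (real CARD('n) * (1 - \<theta>$j * x$j)))"

definition Vexp :: "real^'n \<Rightarrow> 'n \<Rightarrow> real^'n \<Rightarrow> real^'n^'n::finite" where
 "Vexp \<theta> l x = (\<chi> i j. (\<theta>$i * (1 - x$i) * (if j = l then 1 else 0)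
      + (1 - \<theta>$i) * (if j = i then 1 else 0)) / (1 - \<theta>$i * x$i))"

lemma inv_apply:
  fixes A :: "real^'n^'n::finite"
  assumes "invertible A" "A *v y = b"
  shows "matrix_inv A *v b = y"
proof -
  have "A ** matrix_inv A = mat 1 \<and> matrix_inv A ** A = mat 1"
    using someI_ex[OF assms(1)[unfolded invertible_def]] unfolding matrix_inv_def .
  hence "matrix_inv A ** A = mat 1" by blast
  hence "matrix_inv A *v (A *v y) = y" by (simp add: matrix_vector_mul_assoc)
  thus ?thesis using assms(2) by simp
qed

lemma I_diag_mv: "((mat 1 - diagm t) *v v) $ k = (1 - t$k) * v$k"
proof -
  have "((mat 1 - diagm t) *v v) $ k = (\<Sum>j\<in>UNIV. if j = k then (1 - t$k) * v$k else 0)"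
    unfolding matrix_vector_mult_def vec_lambda_beta
    by (intro sum.cong refl) (auto simp: mat_def diagm_def)
  thus ?thesis by simp
qed

lemma diag_mm: "(diagm t ** A) $ i $ k = t$i * A$i$k"
proof -
  have "(diagm t ** A) $ i $ k = (\<Sum>j\<in>UNIV. if j = i then t$i * A$i$k else 0)"
    unfolding matrix_matrix_mult_def vec_lambda_beta
    by (intro sum.cong refl) (auto simp: diagm_def)
  thus ?thesis by simp
qed

lemma diagm_entry: "diagm t $ i $ j = (if i = j then t$i else 0)" by (simp add: diagm_def)

lemma CARD_pos: "0 < real CARD('n::finite)" by simp

context
  fixes C :: "real^'n^'n" and \<theta> :: "real^'n::finite" and l :: 'n
  assumes C_rs: "row_stochastic C" and C_diag: "\<forall>i. C$i$i = 0"
    and star: "star_topology C l" and th_l: "\<theta>$l = 0"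
begin

lemma C_row: assumes "i \<noteq> l" shows "C$i$k = (if k = l then 1 else 0)"
proof -
  have z: "C$i$j = 0" if "j \<noteq> l" for j
  proof -
    have "0 \<le> C$i$j" using C_rs by (simp add: row_stochastic_def)
    moreover have "\<not> C$i$j > 0" using star assms that by (auto simp: star_topology_def)
    ultimately show ?thesis by simp
  qed
  have "1 = (\<Sum>j\<in>UNIV. C$i$j)" using C_rs by (simp add: row_stochastic_def)
  also have "\<dots> = C$i$l + (\<Sum>j\<in>UNIV-{l}. C$i$j)" by (simp add: sum.remove)
  also have "(\<Sum>j\<in>UNIV-{l}. C$i$j) = 0" using z by (intro sum.neutral) auto
  finally show ?thesis using z by auto
qed

lemma Mv: "((mat 1 - transpose (Wmat C x) ** diagm \<theta>) *v y) $ k =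
   (1 - \<theta>$k * x$k) * y$k - (if k = l then (\<Sum>i\<in>UNIV. (1 - x$i) * \<theta>$i * y$i) else 0)"
proof -
  have Me: "(mat 1 - transpose (Wmat C x) ** diagm \<theta>) $ k $ j
     = (if k = j then 1 else 0) - Wmat C x $ j $ k * \<theta>$j" for j
  proof -
    have "(transpose (Wmat C x) ** diagm \<theta>) $ k $ j = (\<Sum>m\<in>UNIV. if m = j then Wmat C x $ j $ k * \<theta>$j else 0)"
      unfolding matrix_matrix_mult_def vec_lambda_beta by (intro sum.cong) (auto simp: transpose_def diagm_def)
    also have "\<dots> = Wmat C x $ j $ k * \<theta>$j" by simp
    finally show ?thesis by (simp add: mat_def)
  qed
  have "((mat 1 - transpose (Wmat C x) ** diagm \<theta>) *v y) $ k
      = (\<Sum>j\<in>UNIV. (if k = j then y$j else 0) - Wmat C x $ j $ k * \<theta>$j * y$j)"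
    unfolding matrix_vector_mult_def vec_lambda_beta by (intro sum.cong refl) (subst Me, simp add: algebra_simps)
  also have "\<dots> = y$k - (\<Sum>j\<in>UNIV. Wmat C x $ j $ k * \<theta>$j * y$j)"
    by (simp add: sum_subtractf)
  also have "(\<Sum>j\<in>UNIV. Wmat C x $ j $ k * \<theta>$j * y$j)
     = (\<Sum>j\<in>UNIV. (if j = k then x$j * \<theta>$j * y$j else 0)
           + (if k = l then (1 - x$j) * \<theta>$j * y$j else 0))"
  proof (rule sum.cong[OF refl])
    fix j
    have "(1 - x$j) * C$j$k * \<theta>$j * y$j = (if k = l then (1 - x$j) * \<theta>$j * y$j else 0)"
      using C_row[of j k] th_l by (cases "j = l") auto
    thus "Wmat C x $ j $ k * \<theta>$j * y$j = (if j = k then x$j * \<theta>$j * y$j else 0)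
           + (if k = l then (1 - x$j) * \<theta>$j * y$j else 0)"
      by (simp add: Wmat_entry algebra_simps)
  qed
  also have "\<dots> = x$k * \<theta>$k * y$k + (if k = l then (\<Sum>i\<in>UNIV. (1 - x$i) * \<theta>$i * y$i) else 0)"
    by (simp add: sum.distrib)
  finally show ?thesis by (simp add: algebra_simps)
qed

lemma M_inv:
  assumes xb: "\<forall>k. \<theta>$k * x$k < 1"
  shows "invertible (mat 1 - transpose (Wmat C x) ** diagm \<theta>)"
proof -
  have "\<forall>y. (mat 1 - transpose (Wmat C x) ** diagm \<theta>) *v y = 0 \<longrightarrow> y = 0"
  proof (intro allI impI)
    fix y assume h: "(mat 1 - transpose (Wmat C x) ** diagm \<theta>) *v y = 0"
    have yk: "y$k = 0" if "k \<noteq> l" for k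
    proof -
      have "(1 - \<theta>$k * x$k) * y$k = 0" using Mv[of x y k] h that by simp
      thus ?thesis using xb[rule_format, of k] by simp
    qed
    have S: "(\<Sum>i\<in>UNIV. (1 - x$i) * \<theta>$i * y$i) = 0"
      by (intro sum.neutral) (metis th_l yk mult_zero_right mult_zero_left)
    have "y$l = 0" using Mv[of x y l] h S th_l by simp
    with yk show "y = 0" by (metis vec_eq_iff zero_index)
  qed
  thus ?thesis using invertible_left_inverse matrix_left_invertible_ker by blast
qed

lemma Fmap_G:
  assumes xb: "\<forall>k. \<theta>$k * x$k < 1"
  shows "Fmap \<theta> C x = Gv \<theta> l x"
proof -
  define N where "N = real CARD('n)"
  have N0: "0 < N" unfolding N_def by simp
  define yv where "yv = (\<chi> k. if k = l then 1/N + (\<Sum>i\<in>UNIV. (1 - x$i) * \<theta>$i * (1 / (N * (1 - \<theta>$i * x$i))))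
     else 1 / (N * (1 - \<theta>$k * x$k)))"
  have S: "(\<Sum>i\<in>UNIV. (1 - x$i) * \<theta>$i * yv$i) = (\<Sum>i\<in>UNIV. (1 - x$i) * \<theta>$i * (1 / (N * (1 - \<theta>$i * x$i))))"
    by (intro sum.cong refl) (auto simp: yv_def th_l)
  have My: "(mat 1 - transpose (Wmat C x) ** diagm \<theta>) *v yv = ones_over_n"
  proof (subst vec_eq_iff, intro allI)
    fix k
    show "((mat 1 - transpose (Wmat C x) ** diagm \<theta>) *v yv) $ k = ones_over_n $ k"
    proof (cases "k = l")
      case True thus ?thesis using S th_l by (simp add: Mv ones_over_n_def yv_def N_def)
    next
      case False
      have "1 - \<theta>$k * x$k \<noteq> 0" using xb[rule_format, of k] by simp
      thus ?thesis using False N0 by (simp add: Mv ones_over_n_def yv_def N_def)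
    qed
  qed
  have inv: "matrix_inv (mat 1 - transpose (Wmat C x) ** diagm \<theta>) *v ones_over_n = yv"
    by (rule inv_apply[OF M_inv[OF xb] My])
  show ?thesis
  proof (subst vec_eq_iff, intro allI)
    fix k
    have F: "Fmap \<theta> C x $ k = (1 - \<theta>$k) * yv$k" unfolding Fmap_def inv by (rule I_diag_mv)
    show "Fmap \<theta> C x $ k = Gv \<theta> l x $ k"
    proof (cases "k = l")
      case True
      have "(\<Sum>i\<in>UNIV. (1 - x$i) * \<theta>$i * (1 / (N * (1 - \<theta>$i * x$i))))
          = (1/N) * (\<Sum>i\<in>UNIV. \<theta>$i * (1 - x$i) / (1 - \<theta>$i * x$i))"
        unfolding sum_distrib_left by (intro sum.cong refl) (simp add: field_simps)
      thus ?thesis using True F th_l by (simp add: yv_def Gv_def N_def)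
    next
      case False
      thus ?thesis using F by (simp add: yv_def Gv_def N_def)
    qed
  qed
qed

lemma G_sum:
  assumes xb: "\<forall>k. \<theta>$k * x$k < 1"
  shows "(\<Sum>k\<in>UNIV. Gv \<theta> l x $ k) = 1"
proof -
  define N where "N = real CARD('n)"
  have N0: "0 < N" unfolding N_def by simp
  define a where "a k = (1 - \<theta>$k) / (N * (1 - \<theta>$k * x$k))" for k
  define b where "b k = (1/N) * (\<theta>$k * (1 - x$k) / (1 - \<theta>$k * x$k))" for k
  have G: "Gv \<theta> l x $ k = a k + (if k = l then (\<Sum>i\<in>UNIV. b i) else 0)" for k
    using th_l by (auto simp: Gv_def a_def b_def N_def sum_distrib_left)
  have ab: "a k + b k = 1/N" for k
  proof -
    have "1 - \<theta>$k * x$k \<noteq> 0" using xb[rule_format, of k] by simp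
    thus ?thesis using N0 by (simp add: a_def b_def field_simps)
  qed
  have "(\<Sum>k\<in>UNIV. Gv \<theta> l x $ k) = (\<Sum>k\<in>UNIV. a k) + (\<Sum>i\<in>UNIV. b i)"
    by (simp add: G sum.distrib)
  also have "\<dots> = (\<Sum>k\<in>(UNIV::'n set). 1/N)" by (simp add: ab sum.distrib[symmetric])
  also have "\<dots> = 1" using N0 by (simp add: N_def)
  finally show ?thesis .
qed

lemma VtG:
  assumes xb: "\<forall>k. \<theta>$k * x$k < 1"
  shows "transpose (Vexp \<theta> l x) *v ones_over_n = Gv \<theta> l x"
proof (subst vec_eq_iff, intro allI)
  fix j
  define N where "N = real CARD('n)"
  have c: "(transpose (Vexp \<theta> l x) *v ones_over_n) $ j = (\<Sum>i\<in>UNIV. Vexp \<theta> l x $ i $ j) / N"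
    by (simp add: matrix_vector_mult_def transpose_def ones_over_n_def N_def sum_divide_distrib)
  show "(transpose (Vexp \<theta> l x) *v ones_over_n) $ j = Gv \<theta> l x $ j"
  proof (cases "j = l")
    case True
    have "(\<Sum>i\<in>UNIV. Vexp \<theta> l x $ i $ j) = (\<Sum>i\<in>UNIV. \<theta>$i * (1 - x$i) / (1 - \<theta>$i * x$i) + (if i = l then 1 else 0))"
      using True th_l by (intro sum.cong refl) (auto simp: Vexp_def add_divide_distrib)
    also have "\<dots> = (\<Sum>i\<in>UNIV. \<theta>$i * (1 - x$i) / (1 - \<theta>$i * x$i)) + 1"
      by (simp add: sum.distrib)
    finally show ?thesis using True c by (simp add: Gv_def N_def field_simps)
  next
    case False
    have "(\<Sum>i\<in>UNIV. Vexp \<theta> l x $ i $ j) = (\<Sum>i\<in>UNIV. if i = j then (1 - \<theta>$j) / (1 - \<theta>$j * x$j) else 0)"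
      using False by (intro sum.cong refl) (auto simp: Vexp_def)
    thus ?thesis using False c by (simp add: Gv_def N_def)
  qed
qed

lemma RHS_entry:
  "(diagm \<theta> ** Wmat C x ** V) $ i $ j = \<theta>$i * (x$i * V$i$j + (1 - x$i) * V$l$j)"
proof (cases "i = l")
  case True
  have "(diagm \<theta> ** Wmat C x ** V) $ i $ j = (\<Sum>k\<in>UNIV. (diagm \<theta> ** Wmat C x) $ i $ k * V$k$j)"
    by (simp add: matrix_matrix_mult_def)
  also have "\<dots> = 0" using True th_l by (simp add: diag_mm)
  finally show ?thesis using True th_l by simp
next
  case False
  have "(diagm \<theta> ** Wmat C x ** V) $ i $ j = (\<Sum>k\<in>UNIV. (diagm \<theta> ** Wmat C x) $ i $ k * V$k$j)"
    by (simp add: matrix_matrix_mult_def)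
  also have "\<dots> = (\<Sum>k\<in>UNIV. (if k = i then \<theta>$i * x$i * V$i$j else 0) + (if k = l then \<theta>$i * (1 - x$i) * V$l$j else 0))"
    using False by (intro sum.cong refl) (auto simp: diag_mm Wmat_entry C_row algebra_simps)
  also have "\<dots> = \<theta>$i * (x$i * V$i$j + (1 - x$i) * V$l$j)"
    by (simp add: sum.distrib algebra_simps)
  finally show ?thesis .
qed

lemma Vexp_eq:
  assumes xb: "\<forall>k. \<theta>$k * x$k < 1"
  shows "V = diagm \<theta> ** Wmat C x ** V + (mat 1 - diagm \<theta>) \<longleftrightarrow> V = Vexp \<theta> l x"
proof -
  have key: "V = diagm \<theta> ** Wmat C x ** V + (mat 1 - diagm \<theta>) \<longleftrightarrow>
     (\<forall>i j. V$i$j = \<theta>$i * (x$i * V$i$j + (1 - x$i) * V$l$j) + (if i = j then 1 - \<theta>$i else 0))"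
    by (simp add: vec_eq_iff RHS_entry mat_def diagm_entry)
  have d: "1 - \<theta>$i * x$i \<noteq> 0" for i using xb[rule_format, of i] by simp
  show ?thesis
  proof
    assume "V = diagm \<theta> ** Wmat C x ** V + (mat 1 - diagm \<theta>)"
    hence E: "\<And>i j. V$i$j = \<theta>$i * (x$i * V$i$j + (1 - x$i) * V$l$j) + (if i = j then 1 - \<theta>$i else 0)"
      using key by blast
    have Vl: "V$l$j = (if j = l then 1 else 0)" for j using E[of l j] th_l by auto
    show "V = Vexp \<theta> l x"
    proof (subst vec_eq_iff, intro allI, subst vec_eq_iff, intro allI)
      fix i j
      have "V$i$j * (1 - \<theta>$i * x$i) = \<theta>$i * (1 - x$i) * (if j = l then 1 else 0)
          + (1 - \<theta>$i) * (if j = i then 1 else 0)"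
        using E[of i j] Vl[of j] by (auto simp: algebra_simps)
      thus "V$i$j = Vexp \<theta> l x $ i $ j" using d[of i] by (simp add: Vexp_def eq_divide_eq)
    qed
  next
    assume V: "V = Vexp \<theta> l x"
    have Vl: "V$l$j = (if j = l then 1 else 0)" for j using V th_l by (simp add: Vexp_def)
    have "V$i$j = \<theta>$i * (x$i * V$i$j + (1 - x$i) * V$l$j) + (if i = j then 1 - \<theta>$i else 0)" for i j
    proof -
      have "V$i$j * (1 - \<theta>$i * x$i) = \<theta>$i * (1 - x$i) * (if j = l then 1 else 0)
          + (1 - \<theta>$i) * (if j = i then 1 else 0)"
        using V d[of i] by (simp add: Vexp_def)
      thus ?thesis using Vl[of j] by (auto simp: algebra_simps)
    qed
    thus "V = diagm \<theta> ** Wmat C x ** V + (mat 1 - diagm \<theta>)" using key by blast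
  qed
qed

lemma Vexp_rs:
  assumes x0: "\<forall>k. 0 \<le> x$k \<and> x$k \<le> 1" and th: "\<forall>k. 0 \<le> \<theta>$k \<and> \<theta>$k < 1"
  shows "row_stochastic (Vexp \<theta> l x)"
proof -
  have d: "0 < 1 - \<theta>$i * x$i" for i
  proof -
    have "\<theta>$i * x$i \<le> \<theta>$i * 1" using x0 th by (intro mult_left_mono) auto
    thus ?thesis using th[rule_format, of i] by simp
  qed
  have nn: "0 \<le> Vexp \<theta> l x $ i $ j" for i j
    using d[of i] x0 th less_imp_le[of "\<theta>$i" 1] by (auto simp: Vexp_def intro!: divide_nonneg_pos add_nonneg_nonneg mult_nonneg_nonneg)
  have rs: "(\<Sum>j\<in>UNIV. Vexp \<theta> l x $ i $ j) = 1" for i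
  proof -
    have "(\<Sum>j\<in>UNIV. Vexp \<theta> l x $ i $ j) = (\<Sum>j\<in>UNIV. \<theta>$i * (1 - x$i) * (if j = l then 1 else 0)
      + (1 - \<theta>$i) * (if j = i then 1 else 0)) / (1 - \<theta>$i * x$i)"
      by (simp add: Vexp_def sum_divide_distrib)
    also have "\<dots> = (\<theta>$i * (1 - x$i) + (1 - \<theta>$i)) / (1 - \<theta>$i * x$i)"
      by (simp add: sum.distrib sum_distrib_left[symmetric])
    also have "\<dots> = 1" using d[of i] by (simp add: field_simps)
    finally show ?thesis .
  qed
  show ?thesis using nn rs by (simp add: row_stochastic_def)
qed

end
lemma rfun_mono:
  assumes N: "N \<ge> 2" and st: "0 < s" "s < t" "t < 1"
  shows "rfun N t < rfun N s"
proof (rule ccontr)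
  define a where "a = rfun N s"
  define b where "b = rfun N t"
  have a: "0 < a" "a < 1/N" "N * a * (1 - s * a) = 1 - s"
    using rfun_props[of N s] N st unfolding a_def by auto
  have b: "0 < b" "b < 1/N" "N * b * (1 - t * b) = 1 - t"
    using rfun_props[of N t] N st unfolding b_def by auto
  assume "\<not> rfun N t < rfun N s"
  hence ab: "a \<le> b" unfolding a_def b_def by simp
  have "1/N \<le> 1/2" using N by (simp add: field_simps)
  hence "a + b < 1" using a b by simp
  moreover have "t * (a+b) \<le> 1 * (a+b)" using st a b by (intro mult_right_mono) auto
  ultimately have p: "0 < 1 - t*(a+b)" by simp
  have h1: "0 \<le> N*(b-a)*(1 - t*(a+b))" using N ab p by simp
  have id1: "N*b*(1-t*b) - N*a*(1-t*a) = N*(b-a)*(1 - t*(a+b))" by (simp add: algebra_simps)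
  have id2: "N*a*(1-t*a) = N*a*(1-s*a) - N*a*a*(t-s)" by (simp add: algebra_simps)
  have "(t-s)*1 \<le> (t-s)*(N*a*a)" using h1 id1 id2 a b by (simp add: algebra_simps)
  hence g: "1 \<le> N*a*a" using st by simp
  have "N*a < 1" using a N by (simp add: field_simps)
  hence "N*a*a < 1*a" using a by (intro mult_strict_right_mono) auto
  moreover have "a < 1" using a \<open>1/N \<le> 1/2\<close> by simp
  ultimately show False using g by simp
qed
theorem theorem2:
  fixes C :: "real ^ 'n ^ 'n" and \<theta> :: "real ^ 'n::finite" and l :: 'n
  assumes n2: "CARD('n) \<ge> 2"
    and C_rs: "row_stochastic C"
    and C_diag: "\<forall>i. C $ i $ i = 0"
    and th_range: "\<forall>i. 0 \<le> \<theta> $ i \<and> \<theta> $ i < 1"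
    and th_pos: "\<exists>j. 0 < \<theta> $ j"
    and star: "star_topology C l"
    and th_l: "\<theta> $ l = 0"
  shows "\<exists>xs. (\<forall>x. equilibrium_A \<theta> C x \<longleftrightarrow> x = xs)
          \<and> (\<forall>x. (\<exists>V. equilibrium_B \<theta> C V x) \<longleftrightarrow> x = xs)
          \<and> xs \<in> int_std_simplex
          \<and> (\<forall>i. \<theta> $ i = 0 \<and> i \<noteq> l \<longrightarrow> xs $ i = 1 / real CARD('n))
          \<and> (\<forall>i. 0 < \<theta> $ i \<longrightarrow>
                xs $ i = (real CARD('n) - sqrt ((real CARD('n))\<^sup>2
                            - 4 * real CARD('n) * \<theta> $ i * (1 - \<theta> $ i)))
                          / (2 * real CARD('n) * \<theta> $ i)
              \<and> xs $ i < 1 / real CARD('n))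
          \<and> (\<forall>s t::real. 0 < s \<and> s < t \<and> t < 1 \<longrightarrow>
                (real CARD('n) - sqrt ((real CARD('n))\<^sup>2 - 4 * real CARD('n) * t * (1 - t)))
                  / (2 * real CARD('n) * t)
              < (real CARD('n) - sqrt ((real CARD('n))\<^sup>2 - 4 * real CARD('n) * s * (1 - s)))
                  / (2 * real CARD('n) * s))
          \<and> xs $ l = 1 / real CARD('n) + (1 / real CARD('n)) *
                (\<Sum>j\<in>{j. 0 < \<theta> $ j}. \<theta> $ j * (1 - xs $ j) / (1 - \<theta> $ j * xs $ j))
          \<and> xs $ l > 1 / real CARD('n)"
proof -
  define N where "N = real CARD('n)"
  have N2: "N \<ge> 2" using n2 unfolding N_def by simp
  have N0: "0 < N" using N2 by simp
  have N1: "1/N \<le> 1/2" using N2 by (simp add: field_simps)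
  have th0: "0 \<le> \<theta>$k" "\<theta>$k < 1" for k using th_range by auto
  define r where "r = (\<chi> k. rfun N (\<theta>$k))"
  have rp: "0 < r$k" "r$k \<le> 1/N" "N * r$k * (1 - \<theta>$k * r$k) = 1 - \<theta>$k" for k
    using rfun_props[OF N2 th0(1)[of k] th0(2)[of k]] by (auto simp: r_def)
  have r1: "r$k < 1" for k using rp(2)[of k] N1 by simp
  have rb: "\<theta>$k * r$k < 1" for k
  proof -
    have "\<theta>$k * r$k \<le> \<theta>$k * 1" using th0[of k] r1[of k] by (intro mult_left_mono) auto
    thus ?thesis using th0[of k] by simp
  qed
  define S where "S = (\<Sum>i\<in>UNIV. \<theta>$i * (1 - r$i) / (1 - \<theta>$i * r$i))"
  define xs where "xs = (\<chi> k. if k = l then 1/N + (1/N) * S else r$k)"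
  have xs_ne: "xs$k = r$k" if "k \<noteq> l" for k using that by (simp add: xs_def)
  have xs_l: "xs$l = 1/N + (1/N) * S" by (simp add: xs_def)
  have termnn: "0 \<le> \<theta>$i * (1 - r$i) / (1 - \<theta>$i * r$i)" for i
    using th0[of i] r1[of i] rb[of i] by (intro divide_nonneg_pos mult_nonneg_nonneg) auto
  obtain j where j: "0 < \<theta>$j" using th_pos by blast
  have "0 < \<theta>$j * (1 - r$j) / (1 - \<theta>$j * r$j)"
    using j r1[of j] rb[of j] by (intro divide_pos_pos mult_pos_pos) auto
  hence Spos: "0 < S" unfolding S_def using termnn by (intro sum_pos2[of UNIV j]) auto
  have xslg: "xs$l > 1/N" using Spos N0 xs_l by simp
  have xsb: "\<forall>k. \<theta>$k * xs$k < 1" using rb th_l xs_ne by (metis mult_zero_left zero_less_one)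
  have GS: "Gv \<theta> l xs $ l = 1/N + (1/N) * S"
  proof -
    have "(\<Sum>i\<in>UNIV. \<theta>$i * (1 - xs$i) / (1 - \<theta>$i * xs$i)) = S"
      unfolding S_def by (intro sum.cong refl) (metis th_l xs_ne mult_zero_left div_0)
    thus ?thesis by (simp add: Gv_def N_def)
  qed
  have Gfix: "Gv \<theta> l xs = xs"
  proof (subst vec_eq_iff, intro allI)
    fix k
    show "Gv \<theta> l xs $ k = xs $ k"
    proof (cases "k = l")
      case True thus ?thesis using GS xs_l by simp
    next
      case False
      have d: "N * (1 - \<theta>$k * r$k) \<noteq> 0" using rb[of k] N0 by simp
      have "r$k * (N * (1 - \<theta>$k * r$k)) = 1 - \<theta>$k" using rp(3)[of k] by (simp add: algebra_simps)
      hence "(1 - \<theta>$k) / (N * (1 - \<theta>$k * r$k)) = r$k" using d by (simp add: divide_eq_eq)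
      thus ?thesis using False xs_ne[OF False] by (simp add: Gv_def N_def)
    qed
  qed
  have sb: "\<forall>k. 0 \<le> x$k \<and> x$k \<le> 1" if "x \<in> std_simplex" for x :: "real^'n"
  proof
    fix k
    have nn: "\<forall>i. 0 \<le> x$i" and s1: "(\<Sum>i\<in>UNIV. x$i) = 1" using that by (auto simp: std_simplex_def)
    have "x$k \<le> (\<Sum>i\<in>UNIV. x$i)" using nn by (intro member_le_sum) auto
    thus "0 \<le> x$k \<and> x$k \<le> 1" using nn s1 by simp
  qed
  have sbb: "\<forall>k. \<theta>$k * x$k < 1" if "x \<in> std_simplex" for x :: "real^'n"
  proof
    fix k
    have "\<theta>$k * x$k \<le> \<theta>$k * 1" using th0[of k] sb[OF that] by (intro mult_left_mono) auto
    thus "\<theta>$k * x$k < 1" using th0[of k] by simp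
  qed
  have xs_simp: "xs \<in> std_simplex"
  proof -
    have "\<forall>k. 0 \<le> xs$k" using rp(1) xs_ne xslg N0 by (metis less_imp_le less_trans zero_less_divide_1_iff)
    moreover have "(\<Sum>k\<in>UNIV. xs$k) = 1"
      using G_sum[OF C_rs C_diag star th_l xsb] Gfix by simp
    ultimately show ?thesis by (simp add: std_simplex_def)
  qed
  have uniq: "x = xs" if xS: "x \<in> std_simplex" and xG: "Gv \<theta> l x = x" for x
  proof -
    have ne: "x$k = xs$k" if "k \<noteq> l" for k
    proof -
      have b: "0 \<le> x$k" "x$k \<le> 1" using sb[OF xS] by auto
      have "\<theta>$k * x$k < 1" using sbb[OF xS] by blast
      hence d: "N * (1 - \<theta>$k * x$k) \<noteq> 0" using N0 by simp
      have "Gv \<theta> l x $ k = (1 - \<theta>$k) / (N * (1 - \<theta>$k * x$k))" using that by (simp add: Gv_def N_def)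
      hence "(1 - \<theta>$k) / (N * (1 - \<theta>$k * x$k)) = x$k" using xG by simp
      hence "x$k * (N * (1 - \<theta>$k * x$k)) = 1 - \<theta>$k" using d by (simp add: divide_eq_eq)
      hence "N * x$k * (1 - \<theta>$k * x$k) = 1 - \<theta>$k" by (simp add: algebra_simps)
      hence "x$k = rfun N (\<theta>$k)" using rfun_unique[OF N2 th0(1)[of k] th0(2)[of k] b] by simp
      thus ?thesis using xs_ne[OF that] by (simp add: r_def)
    qed
    have "Gv \<theta> l x $ l = Gv \<theta> l xs $ l"
    proof -
      have "(\<Sum>i\<in>UNIV. \<theta>$i * (1 - x$i) / (1 - \<theta>$i * x$i)) = (\<Sum>i\<in>UNIV. \<theta>$i * (1 - xs$i) / (1 - \<theta>$i * xs$i))"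
        by (intro sum.cong refl) (metis th_l ne mult_zero_left div_0)
      thus ?thesis by (simp add: Gv_def)
    qed
    hence "x$l = xs$l" using xG Gfix by simp
    with ne show ?thesis by (metis vec_eq_iff)
  qed
  have eqA: "equilibrium_A \<theta> C x \<longleftrightarrow> x = xs" for x
  proof
    assume "equilibrium_A \<theta> C x"
    hence xS: "x \<in> std_simplex" and "Fmap \<theta> C x = x" by (auto simp: equilibrium_A_def)
    hence "Gv \<theta> l x = x" using Fmap_G[OF C_rs C_diag star th_l sbb[OF xS]] by simp
    thus "x = xs" using uniq xS by blast
  next
    assume "x = xs"
    thus "equilibrium_A \<theta> C x" using xs_simp Gfix Fmap_G[OF C_rs C_diag star th_l xsb]
      by (simp add: equilibrium_A_def)
  qed
  have eqB: "(\<exists>V. equilibrium_B \<theta> C V x) \<longleftrightarrow> x = xs" for x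
  proof
    assume "\<exists>V. equilibrium_B \<theta> C V x"
    then obtain V where xS: "x \<in> std_simplex" and VE: "V = diagm \<theta> ** Wmat C x ** V + (mat 1 - diagm \<theta>)"
      and xV: "x = transpose V *v ones_over_n" by (auto simp: equilibrium_B_def)
    have "V = Vexp \<theta> l x" using Vexp_eq[OF C_rs C_diag star th_l sbb[OF xS]] VE by blast
    hence "Gv \<theta> l x = x" using xV VtG[OF C_rs C_diag star th_l sbb[OF xS]] by simp
    thus "x = xs" using uniq xS by blast
  next
    assume x: "x = xs"
    have "row_stochastic (Vexp \<theta> l xs)" using Vexp_rs[OF C_rs C_diag star th_l sb[OF xs_simp] th_range] .
    moreover have "Vexp \<theta> l xs = diagm \<theta> ** Wmat C xs ** Vexp \<theta> l xs + (mat 1 - diagm \<theta>)"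
      using Vexp_eq[OF C_rs C_diag star th_l xsb] by blast
    moreover have "xs = transpose (Vexp \<theta> l xs) *v ones_over_n"
      using VtG[OF C_rs C_diag star th_l xsb] Gfix by simp
    ultimately show "\<exists>V. equilibrium_B \<theta> C V x" using x xs_simp
      by (auto simp: equilibrium_B_def)
  qed
  have intS: "xs \<in> int_std_simplex"
  proof -
    have "\<forall>k. 0 < xs$k" using rp(1) xs_ne xslg N0 by (metis less_trans zero_less_divide_1_iff)
    thus ?thesis using xs_simp by (simp add: std_simplex_def int_std_simplex_def)
  qed
  have ii: "\<forall>i. \<theta>$i = 0 \<and> i \<noteq> l \<longrightarrow> xs$i = 1/N"
    using xs_ne by (simp add: r_def rfun_def)
  have iii: "\<forall>i. 0 < \<theta>$i \<longrightarrow> xs$i = (N - sqrt (N\<^sup>2 - 4 * N * \<theta>$i * (1 - \<theta>$i))) / (2 * N * \<theta>$i)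
        \<and> xs$i < 1/N"
  proof (intro allI impI)
    fix i assume p: "0 < \<theta>$i"
    hence il: "i \<noteq> l" using th_l by auto
    show "xs$i = (N - sqrt (N\<^sup>2 - 4 * N * \<theta>$i * (1 - \<theta>$i))) / (2 * N * \<theta>$i) \<and> xs$i < 1/N"
      using xs_ne[OF il] p rfun_props(4)[OF N2 th0(1)[of i] th0(2)[of i] p]
      by (simp add: r_def rfun_def)
  qed
  have mono: "\<forall>s t::real. 0 < s \<and> s < t \<and> t < 1 \<longrightarrow>
        (N - sqrt (N\<^sup>2 - 4 * N * t * (1 - t))) / (2 * N * t)
      < (N - sqrt (N\<^sup>2 - 4 * N * s * (1 - s))) / (2 * N * s)"
  proof (intro allI impI)
    fix s t :: real assume h: "0 < s \<and> s < t \<and> t < 1"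
    thus "(N - sqrt (N\<^sup>2 - 4 * N * t * (1 - t))) / (2 * N * t)
      < (N - sqrt (N\<^sup>2 - 4 * N * s * (1 - s))) / (2 * N * s)"
      using rfun_mono[OF N2, of s t] by (simp add: rfun_def)
  qed
  have iv: "xs$l = 1/N + (1/N) * (\<Sum>j\<in>{j. 0 < \<theta>$j}. \<theta>$j * (1 - xs$j) / (1 - \<theta>$j * xs$j))"
  proof -
    have "(\<Sum>j\<in>{j. 0 < \<theta>$j}. \<theta>$j * (1 - xs$j) / (1 - \<theta>$j * xs$j))
        = (\<Sum>j\<in>{j. 0 < \<theta>$j}. \<theta>$j * (1 - r$j) / (1 - \<theta>$j * r$j))"
      using th_l xs_ne by (intro sum.cong refl) (metis less_irrefl mem_Collect_eq)
    also have "\<dots> = S" unfolding S_def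
    proof (rule sum.mono_neutral_left)
      show "\<forall>i\<in>UNIV - {j. 0 < \<theta>$j}. \<theta>$i * (1 - r$i) / (1 - \<theta>$i * r$i) = 0"
        using th0 by (metis DiffD2 mem_Collect_eq mult_zero_left div_0 order_le_less)
    qed auto
    finally show ?thesis using xs_l by simp
  qed
  show ?thesis unfolding N_def[symmetric]
    using eqA eqB intS ii iii mono iv xslg by blast
qed

end
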